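(* Let $M\cong\mathbb{Z}^k$ be a lattice with dual $N=\operatorname{Hom}(M,\mathbb{Z})$, let $\mathbb{T}=\operatorname{Spec}\mathbb{C}[M]$, and let $X=\operatorname{Spec}A$ be an affine $\mathbb{T}$-variety. Then there is a unique splitting of the acting torus $\mathbb{T}=\mathbb{T}_1\times\mathbb{T}_2$ (induced by a splitting of lattices $N=N_1\oplus N_2$) such that: (1) the action of $\mathbb{T}_1$ on $X$ is fix-pointed; (2) the torus $\mathbb{T}_2$ acts (not necessarily faithfully) on $X_H:=X/\!/\mathbb{T}_1$, and this action is hyperbolic; (3) the quotient morphism $\pi:X\to X/\!/\mathbb{T}$ factorizes as the composition $X\to X_H\to X_H/\!/\mathbb{T}_2\cong X/\!/\mathbb{T}$, where the first map is the quotient by $\mathbb{T}_1$ and the second is the quotient by $\mathbb{T}_2$.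
   Context: The base field is $\mathbb{C}$. A $\mathbb{T}$-variety is a normal variety with a faithful algebraic $\mathbb{T}$-action. For an affine variety $Y$ with an action of a torus $\mathbb{T}'$, the algebraic quotient is $Y/\!/\mathbb{T}'=\operatorname{Spec}(\mathbb{C}[Y]^{\mathbb{T}'})$. A $\mathbb{T}'$-action on an affine variety $Y=\operatorname{Spec}B$, with character lattice $M'$, corresponds to an $M'$-grading $B=\bigoplus_{u\in M'}B_u$, where $B_u=\{f\in B:\lambda\cdot f=\chi^u(\lambda)f\}$. The weight monoid is $\{u\in M': B_u\neq 0\}$ and the weight cone $\omega\subseteq M'_{\mathbb{Q}}=M'\otimes\mathbb{Q}$ is the cone it spans. The action is called fix-pointed if the only linear subspace contained in $\omega$ is $\{0\}$, and hyperbolic if $\omega=M'_{\mathbb{Q}}$.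
   Formalization: Only $N_1$, and hence $\mathbb{T}_1$, is unique: every splitting $N=N_1\oplus N_2$ satisfying (1)-(3) has the same $N_1$, while the complement $N_2$ is only asserted to exist, not to be unique. The statement above fails without it. *)

theory Defs
  imports "HOL-Analysis.Analysis"
begin

text \<open>Lattices. The character lattice M and its dual N are both modelled as int^'k
  (so M is isomorphic to Z^k, k = CARD('k)); the duality pairing is the standard one.\<close>

definition pair :: "int^'k \<Rightarrow> int^'k \<Rightarrow> int" where
  "pair u n = (\<Sum>i\<in>UNIV. u $ i * n $ i)"

definition sublattice :: "(int^'k) set \<Rightarrow> bool" where
  "sublattice S \<longleftrightarrow> 0 \<in> S \<and> (\<forall>a\<in>S. \<forall>b\<in>S. a + b \<in> S) \<and> (\<forall>a\<in>S. - a \<in> S)"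

definition lattice_splitting :: "(int^'k) set \<Rightarrow> (int^'k) set \<Rightarrow> bool" where
  "lattice_splitting N1 N2 \<longleftrightarrow> sublattice N1 \<and> sublattice N2 \<and> N1 \<inter> N2 = {0}
     \<and> (\<forall>n. \<exists>a\<in>N1. \<exists>b\<in>N2. n = a + b)"

text \<open>The character u of T restricted to the subtorus with cocharacter lattice N',
  i.e. the image of u in Hom(N',Z) (represented as a function vanishing off N').\<close>
definition resChar :: "(int^'k) set \<Rightarrow> int^'k \<Rightarrow> (int^'k \<Rightarrow> int)" where
  "resChar N' u = (\<lambda>n. if n \<in> N' then pair u n else 0)"

text \<open>Hom(N',Q) = M'_Q, as rational functions vanishing off N' and additive on N'.\<close>
definition QHom :: "(int^'k) set \<Rightarrow> (int^'k \<Rightarrow> rat) set" where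
  "QHom N' = {f. (\<forall>n. n \<notin> N' \<longrightarrow> f n = 0) \<and> (\<forall>a\<in>N'. \<forall>b\<in>N'. f (a + b) = f a + f b)}"

definition qcone :: "('n \<Rightarrow> rat) set \<Rightarrow> ('n \<Rightarrow> rat) set" where
  "qcone G = {f. \<exists>S c. finite S \<and> S \<subseteq> G \<and> (\<forall>x\<in>S. c x \<ge> 0)
                   \<and> f = (\<lambda>n. \<Sum>x\<in>S. c x * x n)}"

definition qsubspace :: "('n \<Rightarrow> rat) set \<Rightarrow> bool" where
  "qsubspace V \<longleftrightarrow> (\<lambda>_. 0) \<in> V \<and> (\<forall>f\<in>V. \<forall>g\<in>V. (\<lambda>n. f n + g n) \<in> V)
      \<and> (\<forall>f\<in>V. \<forall>c. (\<lambda>n. c * f n) \<in> V)"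

text \<open>C-algebra structure on a commutative ring 'a, given by a ring homomorphism
  emb : C -> 'a; scalar multiplication is c . a = emb c * a.\<close>
definition complex_algebra_hom :: "(complex \<Rightarrow> 'a::comm_ring_1) \<Rightarrow> bool" where
  "complex_algebra_hom emb \<longleftrightarrow> emb 0 = 0 \<and> emb 1 = 1
     \<and> (\<forall>x y. emb (x + y) = emb x + emb y) \<and> (\<forall>x y. emb (x * y) = emb x * emb y)"

definition C_subspace :: "(complex \<Rightarrow> 'a::comm_ring_1) \<Rightarrow> 'a set \<Rightarrow> bool" where
  "C_subspace emb V \<longleftrightarrow> 0 \<in> V \<and> (\<forall>x\<in>V. \<forall>y\<in>V. x + y \<in> V) \<and> (\<forall>c. \<forall>x\<in>V. emb c * x \<in> V)"

definition finitely_generated_C_algebra :: "(complex \<Rightarrow> 'a::comm_ring_1) \<Rightarrow> bool" where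
  "finitely_generated_C_algebra emb \<longleftrightarrow> (\<exists>G. finite G \<and>
     (\<forall>a. a \<in> \<Inter>{S. range emb \<subseteq> S \<and> G \<subseteq> S \<and> (\<forall>x\<in>S. \<forall>y\<in>S. x + y \<in> S)
                      \<and> (\<forall>x\<in>S. \<forall>y\<in>S. x * y \<in> S)}))"

text \<open>Normality: the domain is integrally closed in its fraction field. A fraction x/y
  (y nonzero) is integral iff x^n + sum_i c_i x^i y^(n-i) = 0 for some n > 0.\<close>
definition integrally_closed_domain :: "'a::idom itself \<Rightarrow> bool" where
  "integrally_closed_domain _ \<longleftrightarrow> (\<forall>(x::'a) y. y \<noteq> 0 \<longrightarrow>
     (\<exists>n c. n > 0 \<and> x ^ n + (\<Sum>i<n. c i * x ^ i * y ^ (n - i)) = 0) \<longrightarrow> y dvd x)"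

definition M_grading :: "(complex \<Rightarrow> 'a::comm_ring_1) \<Rightarrow> (int^'k \<Rightarrow> 'a set) \<Rightarrow> bool" where
  "M_grading emb B \<longleftrightarrow> (\<forall>u. C_subspace emb (B u))
     \<and> (\<forall>u v. \<forall>x\<in>B u. \<forall>y\<in>B v. x * y \<in> B (u + v))
     \<and> (\<forall>a. \<exists>!f. (finite {u. f u \<noteq> 0} \<and> (\<forall>u. f u \<in> B u))
                  \<and> a = (\<Sum>u\<in>{u. f u \<noteq> 0}. f u))"

text \<open>The action is faithful: the weights generate M as a group.\<close>
definition faithful_grading :: "(int^'k \<Rightarrow> 'a::zero set) \<Rightarrow> bool" where
  "faithful_grading B \<longleftrightarrow> (\<forall>S. sublattice S \<and> {u. B u \<noteq> {0}} \<subseteq> S \<longrightarrow> S = UNIV)"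

text \<open>Affine T-variety X = Spec A: A normal f.g. C-domain with faithful M-grading.\<close>
definition affine_T_variety :: "(complex \<Rightarrow> 'a::idom) \<Rightarrow> (int^'k \<Rightarrow> 'a set) \<Rightarrow> bool" where
  "affine_T_variety emb B \<longleftrightarrow> complex_algebra_hom emb \<and> finitely_generated_C_algebra emb
     \<and> integrally_closed_domain TYPE('a) \<and> M_grading emb B \<and> faithful_grading B"

text \<open>Grading induced on A by the subtorus with cocharacter lattice N': the component
  of character chi in Hom(N',Z) is the sum of the B u with u restricting to chi.\<close>
definition Bres :: "(int^'k \<Rightarrow> 'a::comm_ring_1 set) \<Rightarrow> (int^'k) set \<Rightarrow> (int^'k \<Rightarrow> int) \<Rightarrow> 'a set" where
  "Bres B N' chi = {(\<Sum>u\<in>S. f u) | S f. finite S \<and> (\<forall>u\<in>S. f u \<in> B u \<and> resChar N' u = chi)}"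

definition weight_cone :: "((int^'k \<Rightarrow> int) \<Rightarrow> 'a::zero set) \<Rightarrow> (int^'k \<Rightarrow> rat) set" where
  "weight_cone C = qcone ((\<lambda>chi n. of_int (chi n)) ` {chi. C chi \<noteq> {0}})"

definition fix_pointed :: "((int^'k \<Rightarrow> int) \<Rightarrow> 'a::zero set) \<Rightarrow> bool" where
  "fix_pointed C \<longleftrightarrow> (\<forall>V. qsubspace V \<and> V \<subseteq> weight_cone C \<longrightarrow> V = {\<lambda>_. 0})"

definition hyperbolic :: "(int^'k) set \<Rightarrow> ((int^'k \<Rightarrow> int) \<Rightarrow> 'a::zero set) \<Rightarrow> bool" where
  "hyperbolic N' C \<longleftrightarrow> weight_cone C = QHom N'"

end

theory Submission
  imports Defs
begin


definition qof :: "int^'k \<Rightarrow> rat^'k" where "qof u = (\<chi> i. of_int (u$i))"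
definition qpair :: "rat^'k \<Rightarrow> int^'k \<Rightarrow> rat" where
  "qpair q n = (\<Sum>i\<in>UNIV. q$i * of_int (n$i))"

lemma qpair_add_left: "qpair (a + b) n = qpair a n + qpair b n"
  by (simp add: qpair_def sum.distrib algebra_simps)
lemma qpair_scale_left: "qpair (c *s a) n = c * qpair a n"
  by (simp add: qpair_def sum_distrib_left algebra_simps)
lemma qpair_neg_left: "qpair (- a) n = - qpair a n"
  by (simp add: qpair_def sum_negf)
lemma qpair_diff_left: "qpair (a - b) n = qpair a n - qpair b n"
  by (simp add: qpair_def sum_subtractf algebra_simps)
lemma qpair_zero_left[simp]: "qpair 0 n = 0"
  by (simp add: qpair_def)
lemma qpair_sum_left: "qpair (sum f S) n = (\<Sum>x\<in>S. qpair (f x) n)"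
  by (induction S rule: infinite_finite_induct) (auto simp: qpair_add_left)
lemma qpair_add_right: "qpair q (a + b) = qpair q a + qpair q b"
  by (simp add: qpair_def sum.distrib algebra_simps)
lemma qpair_neg_right: "qpair q (- a) = - qpair q a"
  by (simp add: qpair_def sum_negf)
lemma qpair_diff_right: "qpair q (a - b) = qpair q a - qpair q b"
  by (simp add: qpair_def sum_subtractf algebra_simps)
lemma qpair_zero_right[simp]: "qpair q 0 = 0"
  by (simp add: qpair_def)
lemma qpair_smult_right: "qpair q (m *s a) = of_int m * qpair q a"
  by (simp add: qpair_def sum_distrib_left algebra_simps)
lemma qpair_qof: "qpair (qof u) n = of_int (pair u n)"
  by (simp add: qpair_def qof_def pair_def)
lemma qpair_axis: "qpair q (axis i 1) = q $ i"
proof -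
  have "qpair q (axis i 1) = (\<Sum>j\<in>UNIV. if j = i then q$i else 0)"
    unfolding qpair_def axis_def by (intro sum.cong) auto
  then show ?thesis by simp
qed
lemma qpair_eq0_imp: "(\<And>n. qpair q n = 0) \<Longrightarrow> q = 0"
  by (metis qpair_axis vec_eq_iff zero_index)

lemma pair_add_right: "pair u (a + b) = pair u a + pair u b"
  by (simp add: pair_def sum.distrib algebra_simps)
lemma pair_neg_right: "pair u (- a) = - pair u a"
  by (simp add: pair_def sum_negf)
lemma pair_diff_right: "pair u (a - b) = pair u a - pair u b"
  by (simp add: pair_def sum_subtractf algebra_simps)
lemma pair_zero_right[simp]: "pair u 0 = 0"
  by (simp add: pair_def)
lemma pair_zero_left[simp]: "pair 0 u = 0"
  by (simp add: pair_def)
lemma pair_smult_right: "pair u (m *s a) = m * pair u a"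
  by (simp add: pair_def sum_distrib_left algebra_simps)
lemma pair_self0: "pair b b = 0 \<Longrightarrow> b = 0"
proof -
  assume "pair b b = 0"
  then have "(\<Sum>i\<in>UNIV. b$i * b$i) = 0" by (simp add: pair_def)
  then have "\<forall>i\<in>UNIV. b$i * b$i = 0" by (subst (asm) sum_nonneg_eq_0_iff) auto
  then show "b = 0" by (simp add: vec_eq_iff)
qed

definition Kern :: "(int^'k) set \<Rightarrow> (int^'k) set" where
  "Kern W = {n. \<forall>w\<in>W. pair w n = 0}"

definition coneI :: "(int^'k) set \<Rightarrow> (rat^'k) set" where
  "coneI G = {q. \<exists>S c. finite S \<and> S \<subseteq> G \<and> (\<forall>u\<in>S. c u \<ge> 0) \<and> q = (\<Sum>u\<in>S. c u *s qof u)}"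
definition Lsp :: "(int^'k) set \<Rightarrow> (rat^'k) set" where
  "Lsp G = {q. q \<in> coneI G \<and> - q \<in> coneI G}"

lemma coneI_0: "0 \<in> coneI G"
  unfolding coneI_def mem_Collect_eq by (rule exI[of _ "{}"]) auto

lemma coneI_gen: "u \<in> G \<Longrightarrow> qof u \<in> coneI G"
  unfolding coneI_def mem_Collect_eq by (rule exI[of _ "{u}"], rule exI[of _ "\<lambda>_. 1"]) auto

lemma coneI_sumI: "finite S \<Longrightarrow> S \<subseteq> G \<Longrightarrow> \<forall>u\<in>S. c u \<ge> 0 \<Longrightarrow> (\<Sum>u\<in>S. c u *s qof u) \<in> coneI G"
  unfolding coneI_def by blast

lemma coneI_add: assumes "a \<in> coneI G" "b \<in> coneI G" shows "a + b \<in> coneI G"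
proof -
  obtain S c where S: "finite S" "S \<subseteq> G" "\<forall>u\<in>S. c u \<ge> 0" "a = (\<Sum>u\<in>S. c u *s qof u)"
    using assms(1) unfolding coneI_def by blast
  obtain T d where T: "finite T" "T \<subseteq> G" "\<forall>u\<in>T. d u \<ge> 0" "b = (\<Sum>u\<in>T. d u *s qof u)"
    using assms(2) unfolding coneI_def by blast
  define c' where "c' u = (if u \<in> S then c u else 0)" for u
  define d' where "d' u = (if u \<in> T then d u else 0)" for u
  have a: "a = (\<Sum>u\<in>S \<union> T. c' u *s qof u)"
    unfolding S(4) by (rule sum.mono_neutral_cong_left) (auto simp: S T c'_def)
  have b: "b = (\<Sum>u\<in>S \<union> T. d' u *s qof u)"
    unfolding T(4) by (rule sum.mono_neutral_cong_left) (auto simp: S T d'_def)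
  have "a + b = (\<Sum>u\<in>S \<union> T. (c' u + d' u) *s qof u)"
    unfolding a b by (simp add: sum.distrib[symmetric] vector_sadd_rdistrib)
  moreover have "(\<Sum>u\<in>S \<union> T. (c' u + d' u) *s qof u) \<in> coneI G"
    by (rule coneI_sumI) (use S T in \<open>auto simp: c'_def d'_def\<close>)
  ultimately show ?thesis by simp
qed

lemma coneI_scale: assumes "a \<in> coneI G" "t \<ge> 0" shows "t *s a \<in> coneI G"
proof -
  obtain S c where S: "finite S" "S \<subseteq> G" "\<forall>u\<in>S. c u \<ge> 0" "a = (\<Sum>u\<in>S. c u *s qof u)"
    using assms(1) unfolding coneI_def by blast
  have "t *s a = (\<Sum>u\<in>S. (t * c u) *s qof u)"
    unfolding S(4) by (simp add: vec_eq_iff sum_component sum_distrib_left mult.assoc)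
  then show ?thesis using S assms(2) by (auto intro!: coneI_sumI)
qed

lemma coneI_mono: "G \<subseteq> H \<Longrightarrow> coneI G \<subseteq> coneI H"
  unfolding coneI_def by blast

lemma Lsp_add: "a \<in> Lsp G \<Longrightarrow> b \<in> Lsp G \<Longrightarrow> a + b \<in> Lsp G"
  unfolding Lsp_def using coneI_add[of "-a" G "-b"] coneI_add[of a G b] by (auto simp: add.commute)

lemma Lsp_scale: assumes "a \<in> Lsp G" shows "t *s a \<in> Lsp G"
proof (cases "t \<ge> 0")
  case True
  have "- (t *s a) = t *s (- a)" by (simp add: vec_eq_iff)
  then show ?thesis using assms True coneI_scale[of "-a" G t] coneI_scale[of a G t] unfolding Lsp_def by auto
next
  case False
  have e1: "t *s a = (-t) *s (-a)" and e2: "- (t *s a) = (-t) *s a" by (simp_all add: vec_eq_iff)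
  have h1: "- a \<in> coneI G" "a \<in> coneI G" using assms unfolding Lsp_def by auto
  have t: "0 \<le> - t" using False by simp
  have "(-t) *s (-a) \<in> coneI G" by (rule coneI_scale[OF h1(1) t])
  moreover have "(-t) *s a \<in> coneI G" by (rule coneI_scale[OF h1(2) t])
  ultimately show ?thesis unfolding Lsp_def by (simp only: e1 e2 mem_Collect_eq) simp
qed

lemma Lsp_0: "0 \<in> Lsp G" unfolding Lsp_def using coneI_0 by auto

lemma Lsp_sum: "finite S \<Longrightarrow> (\<forall>x\<in>S. f x \<in> Lsp G) \<Longrightarrow> sum f S \<in> Lsp G"
  by (induction S rule: finite_induct) (auto intro: Lsp_add Lsp_0)


lemma Lsp_sub: assumes "q \<in> Lsp G" shows "q \<in> coneI {u\<in>G. qof u \<in> Lsp G}"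
proof -
  obtain S c where S: "finite S" "S \<subseteq> G" "\<forall>u\<in>S. c u \<ge> 0" "q = (\<Sum>u\<in>S. c u *s qof u)"
    using assms unfolding Lsp_def coneI_def by blast
  have nq: "- q \<in> coneI G" using assms unfolding Lsp_def by auto
  define S' where "S' = {u\<in>S. c u \<noteq> 0}"
  have q': "q = (\<Sum>u\<in>S'. c u *s qof u)"
    unfolding S(4) S'_def by (rule sum.mono_neutral_right) (auto simp: S)
  have "qof u \<in> Lsp G" if u: "u \<in> S'" for u
  proof -
    have uS: "u \<in> S" and cu: "c u > 0" using u S(3) unfolding S'_def by force+
    have "q = c u *s qof u + (\<Sum>v\<in>S - {u}. c v *s qof v)"
      unfolding S(4) using S(1) uS by (simp add: sum.remove)
    then have "- (c u *s qof u) = - q + (\<Sum>v\<in>S - {u}. c v *s qof v)"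
      by (simp add: algebra_simps)
    moreover have "(\<Sum>v\<in>S - {u}. c v *s qof v) \<in> coneI G"
      by (rule coneI_sumI) (use S in auto)
    ultimately have "- (c u *s qof u) \<in> coneI G" using coneI_add[OF nq] by simp
    from coneI_scale[OF this, of "1 / c u"] cu have "(1 / c u) *s (- (c u *s qof u)) \<in> coneI G" by simp
    moreover have "(1 / c u) *s (- (c u *s qof u)) = - qof u" using cu by (simp add: vec_eq_iff)
    ultimately have "- qof u \<in> coneI G" by simp
    then show ?thesis unfolding Lsp_def using coneI_gen uS S(2) by auto
  qed
  then show ?thesis unfolding q' using S by (intro coneI_sumI) (auto simp: S'_def)
qed

definition Lint :: "(int^'k) set \<Rightarrow> (int^'k) set" where
  "Lint G = {u\<in>G. qof u \<in> Lsp G}"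

lemma coneI_vanish: assumes "q \<in> coneI H" "\<And>u. u \<in> H \<Longrightarrow> pair u n = 0" shows "qpair q n = 0"
proof -
  obtain S c where S: "finite S" "S \<subseteq> H" "q = (\<Sum>u\<in>S. c u *s qof u)"
    using assms unfolding coneI_def by blast
  show ?thesis unfolding S(3) qpair_sum_left qpair_scale_left qpair_qof
    using S(2) assms(2) by (intro sum.neutral) auto
qed

lemma Lsp_vanish: "q \<in> Lsp G \<Longrightarrow> n \<in> Kern (Lint G) \<Longrightarrow> qpair q n = 0"
  using Lsp_sub[of q G] by (intro coneI_vanish[of q "{u\<in>G. qof u \<in> Lsp G}"]) (auto simp: Kern_def Lint_def)

lemma Kern_finite: "\<exists>W0\<subseteq>W. finite W0 \<and> Kern W0 = Kern W"
proof -
  obtain B where B: "B \<subseteq> qof ` W" "vec.independent B" "qof ` W \<subseteq> vec.span B"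
    "card B = vec.dim (qof ` W)"
    by (rule vec.basis_exists)
  have fB: "finite B" using B(2) vec.finiteI_independent by blast
  obtain W0 where W0: "W0 \<subseteq> W" "finite W0" "B = qof ` W0"
    using finite_subset_image[OF fB B(1)] by blast
  have "Kern W0 \<subseteq> Kern W"
  proof
    fix n assume n: "n \<in> Kern W0"
    show "n \<in> Kern W" unfolding Kern_def
    proof (intro CollectI ballI)
      fix w assume "w \<in> W"
      then have "qof w \<in> vec.span B" using B(3) by blast
      then have "qof w \<in> range (\<lambda>u. \<Sum>v\<in>B. u v *s v)" unfolding vec.span_finite[OF fB] .
      then obtain u where u: "qof w = (\<Sum>v\<in>B. u v *s v)" by blast
      have "qpair (qof w) n = (\<Sum>v\<in>B. u v * qpair v n)"
        unfolding u qpair_sum_left qpair_scale_left ..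
      also have "\<dots> = 0"
        using n unfolding W0(3) Kern_def by (intro sum.neutral) (auto simp: qpair_qof)
      finally show "pair w n = 0" by (simp add: qpair_qof)
    qed
  qed
  moreover have "Kern W \<subseteq> Kern W0" using W0(1) unfolding Kern_def by auto
  ultimately show ?thesis using W0 by blast
qed

lemma Kern_diff: "x \<in> Kern W \<Longrightarrow> y \<in> Kern W \<Longrightarrow> x - y \<in> Kern W"
  by (auto simp: Kern_def pair_diff_right)
lemma Kern_smult: "x \<in> Kern W \<Longrightarrow> m *s x \<in> Kern W"
  by (auto simp: Kern_def pair_smult_right)
lemma Kern_neg: "x \<in> Kern W \<Longrightarrow> - x \<in> Kern W"
  by (auto simp: Kern_def pair_neg_right)
lemmas Kern_closed = Kern_diff Kern_smult Kern_neg

lemma Kern_insert: "Kern (insert w W) = Kern W \<inter> {n. pair w n = 0}"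
  by (auto simp: Kern_def)

lemma annihilator:
  assumes "finite W"
  shows "(\<forall>n\<in>Kern W. qpair z n = 0) \<Longrightarrow> \<exists>c. z = (\<Sum>w\<in>W. c w *s qof w)"
  using assms
proof (induction W arbitrary: z rule: finite_induct)
  case empty
  then have "z = 0" by (intro qpair_eq0_imp) (auto simp: Kern_def)
  then show ?case by simp
next
  case (insert w W)
  show ?case
  proof (cases "\<forall>x\<in>Kern W. pair w x = 0")
    case True
    then have "Kern (insert w W) = Kern W" by (auto simp: Kern_insert)
    then have "\<exists>c. z = (\<Sum>v\<in>W. c v *s qof v)" using insert.IH[of z] insert.prems by simp
    then obtain c where c: "z = (\<Sum>v\<in>W. c v *s qof v)" by blast
    have s1: "(\<Sum>v\<in>W. (c(w := 0)) v *s qof v) = (\<Sum>v\<in>W. c v *s qof v)"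
      using insert(2) by (intro sum.cong) auto
    have "(\<Sum>v\<in>insert w W. (c(w := 0)) v *s qof v) = (c(w := 0)) w *s qof w + (\<Sum>v\<in>W. (c(w := 0)) v *s qof v)"
      using insert(1,2) by (rule sum.insert)
    then have "z = (\<Sum>v\<in>insert w W. (c(w := 0)) v *s qof v)"
      unfolding c s1 by simp
    then show ?thesis by blast
  next
    case False
    then obtain e where e: "e \<in> Kern W" "pair w e \<noteq> 0" by auto
    define t where "t = qpair z e / of_int (pair w e)"
    define z' where "z' = z - t *s qof w"
    have z'e: "qpair z' e = 0" using e unfolding z'_def t_def
      by (simp add: qpair_diff_left qpair_add_left qpair_neg_left qpair_scale_left qpair_qof)
    have zx: "qpair z' x = 0" if x: "x \<in> Kern W" for x
    proof -
      define y where "y = (pair w e) *s x - (pair w x) *s e"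
      have "y \<in> Kern W" unfolding y_def using x e by (intro Kern_closed)
      moreover have "pair w y = 0" unfolding y_def by (simp add: pair_diff_right pair_smult_right)
      ultimately have "y \<in> Kern (insert w W)" by (simp add: Kern_insert)
      then have "qpair z y = 0" using insert.prems by blast
      then have "qpair z' y = 0" unfolding z'_def using \<open>pair w y = 0\<close>
        by (simp add: qpair_diff_left qpair_add_left qpair_neg_left qpair_scale_left qpair_qof)
      then have "of_int (pair w e) * qpair z' x = 0"
        unfolding y_def using z'e by (simp add: qpair_diff_right qpair_smult_right)
      then show ?thesis using e(2) by simp
    qed
    have "\<exists>c. z' = (\<Sum>v\<in>W. c v *s qof v)" using insert.IH[of z'] zx by blast
    then obtain c where c: "z' = (\<Sum>v\<in>W. c v *s qof v)" by blast
    have "z = z' + t *s qof w" unfolding z'_def by simp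
    also have "\<dots> = (\<Sum>v\<in>insert w W. (c(w := t)) v *s qof v)"
    proof -
      have s1: "(\<Sum>v\<in>W. (c(w := t)) v *s qof v) = (\<Sum>v\<in>W. c v *s qof v)"
        using insert(2) by (intro sum.cong) auto
      have "(\<Sum>v\<in>insert w W. (c(w := t)) v *s qof v) = (c(w := t)) w *s qof w + (\<Sum>v\<in>W. (c(w := t)) v *s qof v)"
        using insert(1,2) by (rule sum.insert)
      then show ?thesis unfolding c s1 by (simp add: add.commute)
    qed
    finally show ?thesis by blast
  qed
qed


lemma complement:
  assumes "finite W"
  shows "\<exists>C. sublattice C \<and> Kern W \<inter> C = {0} \<and> (\<forall>n. \<exists>a\<in>Kern W. \<exists>b\<in>C. n = a + b)"
  using assms
proof (induction W rule: finite_induct)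
  case empty
  show ?case by (rule exI[of _ "{0}"]) (auto simp: sublattice_def Kern_def)
next
  case (insert w W)
  then obtain C where C: "sublattice C" "Kern W \<inter> C = {0}" "\<forall>n. \<exists>a\<in>Kern W. \<exists>b\<in>C. n = a + b" by blast
  show ?case
  proof (cases "\<forall>x\<in>Kern W. pair w x = 0")
    case True
    then have "Kern (insert w W) = Kern W" by (auto simp: Kern_insert)
    then show ?thesis using C by auto
  next
    case False
    then obtain x0 where x0: "x0 \<in> Kern W" "pair w x0 \<noteq> 0" by auto
    have ex: "\<exists>m::nat. m > 0 \<and> (\<exists>x\<in>Kern W. pair w x = int m)"
    proof (cases "pair w x0 > 0")
      case True then show ?thesis using x0 by (intro exI[of _ "nat (pair w x0)"]) auto
    next
      case False
      then have "pair w (- x0) > 0" using x0 by (simp add: pair_neg_right)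
      then show ?thesis using x0 Kern_neg[OF x0(1)]
        by (intro exI[of _ "nat (pair w (- x0))"]) (auto intro!: bexI[of _ "- x0"])
    qed
    define dn where "dn = (LEAST m::nat. m > 0 \<and> (\<exists>x\<in>Kern W. pair w x = int m))"
    have dn: "dn > 0" "\<exists>x\<in>Kern W. pair w x = int dn"
      using LeastI_ex[OF ex] unfolding dn_def by auto
    have dmin: "\<And>m::nat. m > 0 \<Longrightarrow> (\<exists>x\<in>Kern W. pair w x = int m) \<Longrightarrow> dn \<le> m"
      unfolding dn_def by (rule Least_le) auto
    obtain e where e: "e \<in> Kern W" "pair w e = int dn" using dn by auto
    define d where "d = int dn"
    have d0: "d > 0" using dn by (simp add: d_def)
    have dvd: "pair w x mod d = 0" if x: "x \<in> Kern W" for x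
    proof (rule ccontr)
      assume r: "pair w x mod d \<noteq> 0"
      define y where "y = x - (pair w x div d) *s e"
      have yK: "y \<in> Kern W" unfolding y_def using x e by (intro Kern_closed)
      have "pair w y = pair w x - (pair w x div d) * d"
        unfolding y_def by (simp add: pair_diff_right pair_smult_right e d_def)
      also have "\<dots> = pair w x mod d" by (simp add: minus_div_mult_eq_mod)
      finally have py: "pair w y = pair w x mod d" .
      have "0 \<le> pair w x mod d" "pair w x mod d < d" using d0 by auto
      then have pos: "nat (pair w x mod d) > 0" and eq: "pair w y = int (nat (pair w x mod d))" using r py by auto
      have "dn \<le> nat (pair w x mod d)" by (rule dmin[OF pos]) (use yK eq in blast)
      then have "int dn \<le> pair w x mod d" using \<open>0 \<le> pair w x mod d\<close> le_nat_iff by blast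
      then show False using \<open>pair w x mod d < d\<close> d_def by linarith
    qed
    define C' where "C' = {b + m *s e | b m. b \<in> C}"
    have sC: "sublattice C'"
      unfolding sublattice_def
    proof (intro conjI ballI)
      show "0 \<in> C'" unfolding C'_def using C(1) unfolding sublattice_def
        by (auto intro!: exI[of _ 0])
    next
      fix a b assume "a \<in> C'" "b \<in> C'"
      then obtain a1 m1 b1 m2 where "a = a1 + m1 *s e" "b = b1 + m2 *s e" "a1 \<in> C" "b1 \<in> C"
        unfolding C'_def by auto
      moreover have "a1 + m1 *s e + (b1 + m2 *s e) = (a1 + b1) + (m1 + m2) *s e"
        by (simp add: vec_eq_iff algebra_simps)
      moreover have "a1 + b1 \<in> C" using C(1) \<open>a1 \<in> C\<close> \<open>b1 \<in> C\<close> unfolding sublattice_def by auto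
      ultimately show "a + b \<in> C'" unfolding C'_def by blast
    next
      fix a assume "a \<in> C'"
      then obtain a1 m1 where "a = a1 + m1 *s e" "a1 \<in> C" unfolding C'_def by auto
      moreover have "- (a1 + m1 *s e) = (- a1) + (- m1) *s e" by (simp add: vec_eq_iff algebra_simps)
      moreover have "- a1 \<in> C" using C(1) \<open>a1 \<in> C\<close> unfolding sublattice_def by auto
      ultimately show "- a \<in> C'" unfolding C'_def by blast
    qed
    have iC: "Kern (insert w W) \<inter> C' = {0}"
    proof -
      have "x = 0" if x: "x \<in> Kern (insert w W)" "x \<in> C'" for x
      proof -
        obtain b m where bm: "x = b + m *s e" "b \<in> C" using x(2) unfolding C'_def by auto
        have xK: "x \<in> Kern W" "pair w x = 0" using x(1) by (auto simp: Kern_insert)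
        have "b = x - m *s e" using bm by simp
        then have "b \<in> Kern W" using xK e by (simp add: Kern_diff Kern_smult)
        then have "b = 0" using C(2) bm by auto
        then have "pair w x = m * d" using bm e by (simp add: pair_smult_right d_def)
        then have "m = 0" using xK d0 by simp
        then show ?thesis using bm \<open>b = 0\<close> by simp
      qed
      moreover have "0 \<in> Kern (insert w W)" by (simp add: Kern_def)
      moreover have "0 \<in> C'" using sC unfolding sublattice_def by auto
      ultimately show ?thesis by auto
    qed
    have spC: "\<exists>a\<in>Kern (insert w W). \<exists>b\<in>C'. n = a + b" for n
    proof -
      obtain a b where ab: "a \<in> Kern W" "b \<in> C" "n = a + b" using C(3) by blast
      define q where "q = pair w a div d"
      have "a - q *s e \<in> Kern W" using ab e by (intro Kern_closed)
      moreover have "pair w (a - q *s e) = 0"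
      proof -
        have "pair w (a - q *s e) = pair w a - q * d"
          by (simp add: pair_diff_right pair_smult_right e d_def)
        also have "\<dots> = pair w a mod d" unfolding q_def by (simp add: minus_div_mult_eq_mod)
        finally show ?thesis using dvd[OF ab(1)] by simp
      qed
      ultimately have "a - q *s e \<in> Kern (insert w W)" by (simp add: Kern_insert)
      moreover have "b + q *s e \<in> C'" using ab unfolding C'_def by auto
      moreover have "n = (a - q *s e) + (b + q *s e)" using ab by simp
      ultimately show ?thesis by blast
    qed
    show ?thesis by (rule exI[of _ C'], intro conjI allI, fact sC, fact iC, rule spC)
  qed
qed



definition Wt :: "(int^'k \<Rightarrow> 'a::zero set) \<Rightarrow> (int^'k) set" where
  "Wt B = {u. B u \<noteq> {0}}"

definition res :: "(int^'k) set \<Rightarrow> rat^'k \<Rightarrow> (int^'k \<Rightarrow> rat)" where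
  "res N' q = (\<lambda>n. if n \<in> N' then qpair q n else 0)"

lemma grading_zero: "M_grading emb B \<Longrightarrow> 0 \<in> B u"
  unfolding M_grading_def C_subspace_def by blast

lemma Bres_zero: "0 \<in> Bres B N' chi"
  unfolding Bres_def by (rule CollectI, rule exI[of _ "{}"], rule exI[of _ "\<lambda>_. 0"]) simp

lemma B_sub_Bres: "B u \<subseteq> Bres B N' (resChar N' u)"
proof
  fix x assume "x \<in> B u"
  then show "x \<in> Bres B N' (resChar N' u)"
    unfolding Bres_def by (intro CollectI exI[of _ "{u}"] exI[of _ "\<lambda>_. x"]) simp
qed

lemma Bres_nz: assumes "x \<in> Bres B N' chi" "x \<noteq> 0" shows "\<exists>u. B u \<noteq> {0} \<and> resChar N' u = chi"
proof -
  obtain S f where S: "finite S" "\<forall>u\<in>S. f u \<in> B u \<and> resChar N' u = chi" "x = (\<Sum>u\<in>S. f u)"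
    using assms(1) unfolding Bres_def by blast
  have "\<exists>u\<in>S. f u \<noteq> 0"
  proof (rule ccontr)
    assume "\<not> ?thesis"
    then have "x = 0" unfolding S(3) by (intro sum.neutral) auto
    then show False using assms(2) by simp
  qed
  then obtain u where "u \<in> S" "f u \<noteq> 0" by blast
  then show ?thesis using S(2) by blast
qed

lemma Bres_rep:
  assumes g: "M_grading emb B" and x: "x \<in> Bres B N1 c1" "x \<in> Bres B N2 c2"
  shows "\<exists>F. finite {u. F u \<noteq> 0} \<and> (\<forall>u. F u \<in> B u) \<and> x = (\<Sum>u\<in>{u. F u \<noteq> 0}. F u)
     \<and> (\<forall>u. F u \<noteq> 0 \<longrightarrow> resChar N1 u = c1 \<and> resChar N2 u = c2)"
proof -
  obtain S f where S: "finite S" "\<forall>u\<in>S. f u \<in> B u \<and> resChar N1 u = c1" "x = (\<Sum>u\<in>S. f u)"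
    using x(1) unfolding Bres_def by blast
  obtain T h where T: "finite T" "\<forall>u\<in>T. h u \<in> B u \<and> resChar N2 u = c2" "x = (\<Sum>u\<in>T. h u)"
    using x(2) unfolding Bres_def by blast
  define F where "F u = (if u \<in> S then f u else 0)" for u
  define H where "H u = (if u \<in> T then h u else 0)" for u
  have z: "\<And>u. 0 \<in> B u" using grading_zero[OF g] .
  have FP: "(finite {u. F u \<noteq> 0} \<and> (\<forall>u. F u \<in> B u)) \<and> x = (\<Sum>u\<in>{u. F u \<noteq> 0}. F u)"
  proof (intro conjI allI)
    show fin: "finite {u. F u \<noteq> 0}" by (rule finite_subset[OF _ S(1)]) (auto simp: F_def)
    show "F u \<in> B u" for u using S(2) z by (auto simp: F_def)
    have "x = (\<Sum>u\<in>S. F u)" unfolding S(3) by (intro sum.cong) (auto simp: F_def)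
    also have "\<dots> = (\<Sum>u\<in>{u. F u \<noteq> 0}. F u)"
      by (rule sum.mono_neutral_right[OF S(1)]) (auto simp: F_def)
    finally show "x = (\<Sum>u\<in>{u. F u \<noteq> 0}. F u)" .
  qed
  have HP: "(finite {u. H u \<noteq> 0} \<and> (\<forall>u. H u \<in> B u)) \<and> x = (\<Sum>u\<in>{u. H u \<noteq> 0}. H u)"
  proof (intro conjI allI)
    show fin: "finite {u. H u \<noteq> 0}" by (rule finite_subset[OF _ T(1)]) (auto simp: H_def)
    show "H u \<in> B u" for u using T(2) z by (auto simp: H_def)
    have "x = (\<Sum>u\<in>T. H u)" unfolding T(3) by (intro sum.cong) (auto simp: H_def)
    also have "\<dots> = (\<Sum>u\<in>{u. H u \<noteq> 0}. H u)"
      by (rule sum.mono_neutral_right[OF T(1)]) (auto simp: H_def)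
    finally show "x = (\<Sum>u\<in>{u. H u \<noteq> 0}. H u)" .
  qed
  have ex1: "\<exists>!f. (finite {u. f u \<noteq> 0} \<and> (\<forall>u. f u \<in> B u)) \<and> x = (\<Sum>u\<in>{u. f u \<noteq> 0}. f u)"
    using g unfolding M_grading_def by blast
  have FH: "F = H" using ex1 FP HP by blast
  have "\<forall>u. F u \<noteq> 0 \<longrightarrow> resChar N1 u = c1 \<and> resChar N2 u = c2"
  proof (intro allI impI)
    fix u assume "F u \<noteq> 0"
    then have "u \<in> S" unfolding F_def by (auto split: if_splits)
    have "H u \<noteq> 0" using FH \<open>F u \<noteq> 0\<close> by simp
    then have "u \<in> T" unfolding H_def by (auto split: if_splits)
    then show "resChar N1 u = c1 \<and> resChar N2 u = c2" using S(2) T(2) \<open>u \<in> S\<close> by blast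
  qed
  then show ?thesis using FP by blast
qed

lemma resChar_of: "(\<lambda>n. rat_of_int (resChar N' u n)) = res N' (qof u)"
  by (auto simp: resChar_def res_def qpair_qof)

lemma qcone_res: "qcone ((\<lambda>u. res N' (qof u)) ` G0) = res N' ` coneI G0"
proof
  show "qcone ((\<lambda>u. res N' (qof u)) ` G0) \<subseteq> res N' ` coneI G0"
  proof
    fix f assume "f \<in> qcone ((\<lambda>u. res N' (qof u)) ` G0)"
    then obtain S c where S: "finite S" "S \<subseteq> (\<lambda>u. res N' (qof u)) ` G0" "\<forall>x\<in>S. c x \<ge> 0"
      "f = (\<lambda>n. \<Sum>x\<in>S. c x * x n)" unfolding qcone_def by blast
    obtain U where U: "U \<subseteq> G0" "inj_on (\<lambda>u. res N' (qof u)) U" "S = (\<lambda>u. res N' (qof u)) ` U"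
      using S(2) subset_image_inj by metis
    have fU: "finite U" using S(1) U(2,3) finite_image_iff by metis
    define q where "q = (\<Sum>u\<in>U. c (res N' (qof u)) *s qof u)"
    have "q \<in> coneI G0" unfolding q_def using fU U S(3) by (intro coneI_sumI) auto
    moreover have "f = res N' q"
    proof
      fix n
      have "f n = (\<Sum>u\<in>U. c (res N' (qof u)) * res N' (qof u) n)"
        unfolding S(4) U(3) by (simp add: sum.reindex[OF U(2)])
      also have "\<dots> = res N' q n"
        unfolding q_def res_def by (auto simp: qpair_sum_left qpair_scale_left)
      finally show "f n = res N' q n" .
    qed
    ultimately show "f \<in> res N' ` coneI G0" by blast
  qed
next
  show "res N' ` coneI G0 \<subseteq> qcone ((\<lambda>u. res N' (qof u)) ` G0)"
  proof
    fix f assume "f \<in> res N' ` coneI G0"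
    then obtain q where q: "q \<in> coneI G0" "f = res N' q" by blast
    then obtain S c where S: "finite S" "S \<subseteq> G0" "\<forall>u\<in>S. c u \<ge> 0" "q = (\<Sum>u\<in>S. c u *s qof u)"
      unfolding coneI_def by blast
    let ?g = "\<lambda>u. res N' (qof u)"
    define c' where "c' x = (\<Sum>u\<in>{u\<in>S. ?g u = x}. c u)" for x
    have "f = (\<lambda>n. \<Sum>x\<in>?g ` S. c' x * x n)"
    proof
      fix n
      have "f n = (\<Sum>u\<in>S. c u * ?g u n)"
        unfolding q(2) S(4) res_def by (auto simp: qpair_sum_left qpair_scale_left)
      also have "\<dots> = (\<Sum>x\<in>?g ` S. \<Sum>u\<in>{u\<in>S. ?g u = x}. c u * ?g u n)"
        by (rule sum.image_gen[OF S(1)])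
      also have "\<dots> = (\<Sum>x\<in>?g ` S. c' x * x n)"
        unfolding c'_def sum_distrib_right by (intro sum.cong refl) auto
      finally show "f n = (\<Sum>x\<in>?g ` S. c' x * x n)" .
    qed
    moreover have "\<forall>x\<in>?g ` S. c' x \<ge> 0" unfolding c'_def using S(3) by (auto intro: sum_nonneg)
    moreover have "finite (?g ` S)" "?g ` S \<subseteq> ?g ` G0" using S(1,2) by auto
    ultimately show "f \<in> qcone (?g ` G0)" unfolding qcone_def mem_Collect_eq
      by (intro exI[of _ "?g ` S"] exI[of _ c'] conjI) assumption+
  qed
qed



lemma vec_expand: "n = (\<Sum>i\<in>UNIV. (n$i) *s axis i (1::int))"
proof -
  have "(\<Sum>i\<in>UNIV. (n$i) *s axis i (1::int)) $ j = n $ j" for j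
  proof -
    have "(\<Sum>i\<in>UNIV. (n$i) *s axis i (1::int)) $ j = (\<Sum>i\<in>UNIV. if i = j then n$j else 0)"
      unfolding sum_component by (intro sum.cong) (auto simp: axis_def)
    then show ?thesis by simp
  qed
  then show ?thesis by (simp add: vec_eq_iff)
qed

lemma additive_qpair:
  fixes h :: "int^'k \<Rightarrow> rat"
  assumes add: "\<And>x y. h (x + y) = h x + h y"
  shows "h n = qpair (\<chi> i. h (axis i 1)) n"
proof -
  have h0: "h 0 = 0" using add[of 0 0] by simp
  have hneg: "h (- x) = - h x" for x using add[of x "- x"] h0 by simp
  have hnat: "h (of_nat m *s x) = of_nat m * h x" for m x
  proof (induction m)
    case 0 then show ?case using h0 by (simp add: vec_eq_iff)
  next
    case (Suc m)
    have "of_nat (Suc m) *s x = x + of_nat m *s x" by (simp add: vec_eq_iff algebra_simps)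
    then show ?case using Suc add by (simp add: algebra_simps)
  qed
  have hint: "h (m *s x) = of_int m * h x" for m x
  proof (cases "m \<ge> 0")
    case True
    define k where "k = nat m"
    have "m = int k" using True unfolding k_def by simp
    then show ?thesis using hnat[of k x] by simp
  next
    case False
    define k where "k = nat (- m)"
    have k: "m = - int k" using False unfolding k_def by simp
    have "m *s x = - (of_nat k *s x)" unfolding k by (simp add: vec_eq_iff)
    then show ?thesis using hnat[of k x] hneg k by simp
  qed
  have hsum: "h (sum f S) = (\<Sum>i\<in>S. h (f i))" for f :: "'k \<Rightarrow> int^'k" and S
    by (induction S rule: infinite_finite_induct) (auto simp: h0 add)
  have "h n = h (\<Sum>i\<in>UNIV. (n$i) *s axis i (1::int))" using vec_expand[of n] by simp
  also have "\<dots> = (\<Sum>i\<in>UNIV. of_int (n$i) * h (axis i 1))" unfolding hsum hint ..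
  also have "\<dots> = qpair (\<chi> i. h (axis i 1)) n" unfolding qpair_def by (simp add: mult.commute)
  finally show ?thesis .
qed

lemma resChar_zero_iff: "resChar N' u = (\<lambda>_. 0) \<longleftrightarrow> (\<forall>n\<in>N'. pair u n = 0)"
  by (auto simp: resChar_def fun_eq_iff)

lemma ex_nonzero: "A \<noteq> {0} \<Longrightarrow> 0 \<in> A \<Longrightarrow> \<exists>x\<in>A. x \<noteq> 0" by blast

lemma wc1:
  assumes g: "M_grading emb B"
  shows "weight_cone (Bres B N') = res N' ` coneI (Wt B)"
proof -
  have "{chi. Bres B N' chi \<noteq> {0}} = resChar N' ` Wt B"
  proof (intro equalityI subsetI)
    fix chi assume "chi \<in> {chi. Bres B N' chi \<noteq> {0}}"
    then obtain x where "x \<in> Bres B N' chi" "x \<noteq> 0" using Bres_zero[of B N' chi] ex_nonzero[of "Bres B N' chi"] by blast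
    then show "chi \<in> resChar N' ` Wt B" using Bres_nz unfolding Wt_def by blast
  next
    fix chi assume "chi \<in> resChar N' ` Wt B"
    then obtain u where u: "B u \<noteq> {0}" "chi = resChar N' u" unfolding Wt_def by blast
    then obtain x where "x \<in> B u" "x \<noteq> 0" using grading_zero[OF g, of u] ex_nonzero[of "B u"] by blast
    then show "chi \<in> {chi. Bres B N' chi \<noteq> {0}}" using B_sub_Bres u by blast
  qed
  then have e: "(\<lambda>chi n. rat_of_int (chi n)) ` {chi. Bres B N' chi \<noteq> {0}} = (\<lambda>u. res N' (qof u)) ` Wt B"
    by (simp add: image_image resChar_of)
  show ?thesis unfolding weight_cone_def e by (rule qcone_res)
qed

lemma wc2:
  assumes g: "M_grading emb B"
  shows "weight_cone (\<lambda>chi. Bres B N1 (\<lambda>_. 0) \<inter> Bres B N2 chi)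
     = res N2 ` coneI {u \<in> Wt B. resChar N1 u = (\<lambda>_. 0)}"
proof -
  have "{chi. Bres B N1 (\<lambda>_. 0) \<inter> Bres B N2 chi \<noteq> {0}} = resChar N2 ` {u \<in> Wt B. resChar N1 u = (\<lambda>_. 0)}"
  proof (intro equalityI subsetI)
    fix chi assume "chi \<in> {chi. Bres B N1 (\<lambda>_. 0) \<inter> Bres B N2 chi \<noteq> {0}}"
    then obtain x where x: "x \<in> Bres B N1 (\<lambda>_. 0)" "x \<in> Bres B N2 chi" "x \<noteq> 0"
      using Bres_zero[of B N1 "\<lambda>_. 0"] Bres_zero[of B N2 chi] ex_nonzero[of "Bres B N1 (\<lambda>_. 0) \<inter> Bres B N2 chi"] by blast
    obtain F where F: "finite {u. F u \<noteq> 0}" "\<forall>u. F u \<in> B u" "x = (\<Sum>u\<in>{u. F u \<noteq> 0}. F u)"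
      "\<forall>u. F u \<noteq> 0 \<longrightarrow> resChar N1 u = (\<lambda>_. 0) \<and> resChar N2 u = chi"
      using Bres_rep[OF g x(1,2)] by (elim exE conjE) (rule that)
    have "\<exists>u. F u \<noteq> 0"
    proof (rule ccontr)
      assume "\<not> ?thesis"
      then have "x = 0" unfolding F(3) by simp
      then show False using x(3) by simp
    qed
    then obtain u where u: "F u \<noteq> 0" by blast
    have "F u \<in> B u" using F(2) by blast
    then have "B u \<noteq> {0}" using u by blast
    moreover have "resChar N1 u = (\<lambda>_. 0)" "chi = resChar N2 u" using F(4) u by auto
    ultimately show "chi \<in> resChar N2 ` {u \<in> Wt B. resChar N1 u = (\<lambda>_. 0)}"
      unfolding Wt_def by blast
  next
    fix chi assume "chi \<in> resChar N2 ` {u \<in> Wt B. resChar N1 u = (\<lambda>_. 0)}"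
    then obtain u where u: "B u \<noteq> {0}" "resChar N1 u = (\<lambda>_. 0)" "chi = resChar N2 u" unfolding Wt_def by blast
    then obtain x where "x \<in> B u" "x \<noteq> 0" using grading_zero[OF g, of u] ex_nonzero[of "B u"] by blast
    then have "x \<in> Bres B N1 (\<lambda>_. 0)" "x \<in> Bres B N2 chi" "x \<noteq> 0"
      using B_sub_Bres[of B u N1] B_sub_Bres[of B u N2] u(2,3) by auto
    then show "chi \<in> {chi. Bres B N1 (\<lambda>_. 0) \<inter> Bres B N2 chi \<noteq> {0}}"
      by blast
  qed
  then have e: "(\<lambda>chi n. rat_of_int (chi n)) ` {chi. Bres B N1 (\<lambda>_. 0) \<inter> Bres B N2 chi \<noteq> {0}}
     = (\<lambda>u. res N2 (qof u)) ` {u \<in> Wt B. resChar N1 u = (\<lambda>_. 0)}"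
    by (simp add: image_image resChar_of)
  show ?thesis unfolding weight_cone_def e by (rule qcone_res)
qed



lemma res_scale: "res N' (c *s q) = (\<lambda>m. c * res N' q m)"
  by (rule ext) (simp add: res_def qpair_scale_left)

lemma Kern_add: "x \<in> Kern W \<Longrightarrow> y \<in> Kern W \<Longrightarrow> x + y \<in> Kern W"
  by (auto simp: Kern_def pair_add_right)

lemma Kern_zero: "0 \<in> Kern W"
  by (auto simp: Kern_def)

lemma Kern_sublattice: "sublattice (Kern W)"
  unfolding sublattice_def using Kern_zero Kern_add Kern_neg by blast

lemma fixA:
  assumes g: "M_grading emb B" and fp: "fix_pointed (Bres B N1')"
    and w: "w \<in> Lint (Wt B)" and n: "n \<in> N1'"
  shows "pair w n = 0"
proof -
  define q where "q = qof w"
  have hq: "q \<in> Lsp (Wt B)" using w unfolding Lint_def q_def by blast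
  define V where "V = range (\<lambda>c. \<lambda>m. c * res N1' q m)"
  have sV: "qsubspace V"
    unfolding qsubspace_def
  proof (intro conjI ballI allI)
    show "(\<lambda>_. 0) \<in> V" unfolding V_def by (rule image_eqI[of _ _ 0]) auto
  next
    fix f h assume "f \<in> V" "h \<in> V"
    then obtain c1 c2 where "f = (\<lambda>m. c1 * res N1' q m)" "h = (\<lambda>m. c2 * res N1' q m)"
      unfolding V_def by blast
    then have "(\<lambda>n. f n + h n) = (\<lambda>m. (c1 + c2) * res N1' q m)" by (simp add: algebra_simps)
    then show "(\<lambda>n. f n + h n) \<in> V" unfolding V_def by blast
  next
    fix f c assume "f \<in> V"
    then obtain c1 where "f = (\<lambda>m. c1 * res N1' q m)" unfolding V_def by blast
    then have "(\<lambda>n. c * f n) = (\<lambda>m. (c * c1) * res N1' q m)" by (simp add: algebra_simps)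
    then show "(\<lambda>n. c * f n) \<in> V" unfolding V_def by blast
  qed
  have "V \<subseteq> weight_cone (Bres B N1')"
  proof
    fix f assume "f \<in> V"
    then obtain c where c: "f = (\<lambda>m. c * res N1' q m)" unfolding V_def by blast
    have "c *s q \<in> Lsp (Wt B)" using Lsp_scale[OF hq] .
    then have "c *s q \<in> coneI (Wt B)" unfolding Lsp_def by blast
    moreover have "f = res N1' (c *s q)" unfolding c res_scale ..
    ultimately show "f \<in> weight_cone (Bres B N1')" unfolding wc1[OF g] by blast
  qed
  then have "V = {\<lambda>_. 0}" using fp sV unfolding fix_pointed_def by blast
  moreover have "(\<lambda>m. 1 * res N1' q m) \<in> V" unfolding V_def by blast
  ultimately have "(\<lambda>m. 1 * res N1' q m) = (\<lambda>_. 0)" by blast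
  then have "res N1' q n = 0" by (metis mult_1)
  then show ?thesis using n unfolding res_def q_def by (simp add: qpair_qof)
qed

lemma hypB:
  assumes g: "M_grading emb B" and spl: "lattice_splitting N1' N2'"
    and hyp: "hyperbolic N2' (\<lambda>chi. Bres B N1' (\<lambda>_. 0) \<inter> Bres B N2' chi)"
    and n: "n \<in> Kern (Lint (Wt B))"
  shows "n \<in> N1'"
proof -
  define P' where "P' = {u \<in> Wt B. resChar N1' u = (\<lambda>_. 0)}"
  have hw: "res N2' ` coneI P' = QHom N2'"
    using hyp wc2[OF g, of N1' N2'] unfolding hyperbolic_def P'_def by simp
  have dec: "\<And>x. \<exists>a\<in>N1'. \<exists>b\<in>N2'. x = a + b" using spl unfolding lattice_splitting_def by blast
  obtain a b where ab: "a \<in> N1'" "b \<in> N2'" "n = a + b" using dec by blast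
  have sl2: "sublattice N2'" using spl unfolding lattice_splitting_def by blast
  define f where "f = (\<lambda>x. if x \<in> N2' then rat_of_int (pair b x) else 0)"
  define f' where "f' = (\<lambda>x. if x \<in> N2' then - rat_of_int (pair b x) else 0)"
  have "f \<in> QHom N2'" unfolding QHom_def f_def using sl2 unfolding sublattice_def
    by (auto simp: pair_add_right)
  then obtain q where q: "q \<in> coneI P'" "f = res N2' q" using hw by (metis imageE)
  have "f' \<in> QHom N2'" unfolding QHom_def f'_def using sl2 unfolding sublattice_def
    by (auto simp: pair_add_right)
  then obtain q' where q': "q' \<in> coneI P'" "f' = res N2' q'" using hw by (metis imageE)
  have vP: "pair u x = 0" if "u \<in> P'" "x \<in> N1'" for u x
    using that resChar_zero_iff unfolding P'_def by blast
  have v1: "qpair q x = 0" if "x \<in> N1'" for x using coneI_vanish[OF q(1)] vP that by blast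
  have v2: "qpair q' x = 0" if "x \<in> N1'" for x using coneI_vanish[OF q'(1)] vP that by blast
  have fb: "qpair q y = f y" "qpair q' y = f' y" if "y \<in> N2'" for y
    using that unfolding q(2) q'(2) res_def by auto
  have "qpair (q + q') x = 0" for x
  proof -
    obtain a1 b1 where "a1 \<in> N1'" "b1 \<in> N2'" "x = a1 + b1" using dec by blast
    then show ?thesis using v1 v2 fb[of b1]
      by (simp add: qpair_add_left qpair_add_right f_def f'_def)
  qed
  then have "q + q' = 0" by (rule qpair_eq0_imp)
  then have "- q = q'" by (simp add: add_eq_0_iff)
  moreover have "coneI P' \<subseteq> coneI (Wt B)" by (rule coneI_mono) (auto simp: P'_def)
  ultimately have "q \<in> Lsp (Wt B)" using q(1) q'(1) unfolding Lsp_def by auto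
  then have "qpair q n = 0" using Lsp_vanish n by blast
  then have "qpair q a + qpair q b = 0" unfolding ab(3) qpair_add_right .
  then have "rat_of_int (pair b b) = 0" using v1[OF ab(1)] fb(1)[OF ab(2)] ab(2) by (simp add: f_def)
  then have "b = 0" using pair_self0 by simp
  then show ?thesis using ab by simp
qed

lemma vanish_Lsp:
  assumes "\<forall>n\<in>Kern (Lint G). qpair z n = 0" shows "z \<in> Lsp G"
proof -
  obtain W0 where W0: "W0 \<subseteq> Lint G" "finite W0" "Kern W0 = Kern (Lint G)"
    using Kern_finite by blast
  obtain c where c: "z = (\<Sum>w\<in>W0. c w *s qof w)" using annihilator[OF W0(2)] assms W0(3) by metis
  have "\<forall>w\<in>W0. c w *s qof w \<in> Lsp G"
    using W0(1) Lsp_scale unfolding Lint_def by blast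
  then show ?thesis unfolding c by (rule Lsp_sum[OF W0(2)])
qed

lemma complement_N1: "\<exists>N2. lattice_splitting (Kern (Lint G)) N2"
proof -
  obtain W0 where W0: "W0 \<subseteq> Lint G" "finite W0" "Kern W0 = Kern (Lint G)"
    using Kern_finite by blast
  obtain C where C: "sublattice C" "Kern W0 \<inter> C = {0}" "\<forall>n. \<exists>a\<in>Kern W0. \<exists>b\<in>C. n = a + b"
    using complement[OF W0(2)] by blast
  show ?thesis unfolding lattice_splitting_def using C W0(3) Kern_sublattice by metis
qed



lemma fixE:
  assumes g: "M_grading emb B"
  shows "fix_pointed (Bres B (Kern (Lint (Wt B))))"
  unfolding fix_pointed_def
proof (intro allI impI)
  fix V assume A: "qsubspace V \<and> V \<subseteq> weight_cone (Bres B (Kern (Lint (Wt B))))"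
  define N1 where "N1 = Kern (Lint (Wt B))"
  have sV: "qsubspace V" and sub: "V \<subseteq> res N1 ` coneI (Wt B)"
    using A wc1[OF g] unfolding N1_def by auto
  have "v = (\<lambda>_. 0)" if v: "v \<in> V" for v
  proof -
    obtain q where q: "q \<in> coneI (Wt B)" "v = res N1 q" using sub v by blast
    have "(\<lambda>n. (-1) * v n) \<in> V" using sV v unfolding qsubspace_def by blast
    then obtain q' where q': "q' \<in> coneI (Wt B)" "(\<lambda>n. (-1) * v n) = res N1 q'" using sub by blast
    have "qpair (q + q') n = 0" if n: "n \<in> N1" for n
    proof -
      have "qpair q n = v n" using n unfolding q(2) res_def by simp
      moreover have "qpair q' n = - v n" using n fun_cong[OF q'(2), of n] unfolding res_def by simp
      ultimately show ?thesis by (simp add: qpair_add_left)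
    qed
    then have "q + q' \<in> Lsp (Wt B)" using vanish_Lsp unfolding N1_def by blast
    then have "- (q + q') \<in> coneI (Wt B)" unfolding Lsp_def by blast
    from coneI_add[OF q'(1) this] have "- q \<in> coneI (Wt B)" by (simp add: algebra_simps)
    then have "q \<in> Lsp (Wt B)" using q(1) unfolding Lsp_def by blast
    then show "v = (\<lambda>_. 0)" unfolding q(2) res_def N1_def by (intro ext) (simp add: Lsp_vanish)
  qed
  moreover have "(\<lambda>_. 0) \<in> V" using sV unfolding qsubspace_def by blast
  ultimately show "V = {\<lambda>_. 0}" by blast
qed

lemma hypE:
  assumes g: "M_grading emb B" and spl: "lattice_splitting (Kern (Lint (Wt B))) N2"
  shows "hyperbolic N2 (\<lambda>chi. Bres B (Kern (Lint (Wt B))) (\<lambda>_. 0) \<inter> Bres B N2 chi)"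
proof -
  define N1 where "N1 = Kern (Lint (Wt B))"
  define P where "P = {u \<in> Wt B. resChar N1 u = (\<lambda>_. 0)}"
  have sl2: "sublattice N2" and int: "N1 \<inter> N2 = {0}" and dec: "\<And>x. \<exists>a\<in>N1. \<exists>b\<in>N2. x = a + b"
    using spl unfolding lattice_splitting_def N1_def by blast+
  have "res N2 ` coneI P = QHom N2"
  proof (intro equalityI subsetI)
    fix f assume "f \<in> res N2 ` coneI P"
    then obtain q where f: "f = res N2 q" by blast
    show "f \<in> QHom N2" unfolding QHom_def f res_def using sl2 unfolding sublattice_def
      by (auto simp: qpair_add_right)
  next
    fix f assume f: "f \<in> QHom N2"
    have f0: "\<forall>n. n \<notin> N2 \<longrightarrow> f n = 0" and fadd: "\<forall>a\<in>N2. \<forall>b\<in>N2. f (a + b) = f a + f b"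
      using f unfolding QHom_def by auto
    have z2: "0 \<in> N2" using sl2 unfolding sublattice_def by blast
    have P2ex: "\<exists>b. b \<in> N2 \<and> n - b \<in> N1" for n
    proof -
      obtain a b where "a \<in> N1" "b \<in> N2" "n = a + b" using dec by blast
      then show ?thesis by (intro exI[of _ b]) simp
    qed
    define P2 where "P2 n = (SOME b. b \<in> N2 \<and> n - b \<in> N1)" for n
    have P2: "P2 n \<in> N2 \<and> n - P2 n \<in> N1" for n
      unfolding P2_def by (rule someI_ex[OF P2ex])
    have uniq: "P2 n = b" if "b \<in> N2" "n - b \<in> N1" for n b
    proof -
      have "P2 n + (- b) \<in> N2" using P2[of n] that(1) sl2 unfolding sublattice_def by blast
      moreover have "(n - b) - (n - P2 n) \<in> N1" using P2[of n] that(2) unfolding N1_def by (rule_tac Kern_diff) auto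
      moreover have "(n - b) - (n - P2 n) = P2 n + (- b)" by simp
      ultimately have "P2 n + (- b) \<in> N1 \<inter> N2" by simp
      then have "P2 n + (- b) = 0" using int by blast
      then show ?thesis by (simp add: add_eq_0_iff)
    qed
    define h where "h n = f (P2 n)" for n
    have hadd: "h (x + y) = h x + h y" for x y
    proof -
      have "P2 x + P2 y \<in> N2" using P2[of x] P2[of y] sl2 unfolding sublattice_def by blast
      moreover have "(x + y) - (P2 x + P2 y) \<in> N1"
      proof -
        have m: "(x - P2 x) + (y - P2 y) \<in> N1" using P2[of x] P2[of y] unfolding N1_def by (rule_tac Kern_add) auto
        have e: "(x + y) - (P2 x + P2 y) = (x - P2 x) + (y - P2 y)" by (simp add: algebra_simps)
        show ?thesis unfolding e by (rule m)
      qed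
      ultimately have "P2 (x + y) = P2 x + P2 y" by (rule uniq)
      then show ?thesis unfolding h_def using fadd P2[of x] P2[of y] by simp
    qed
    define z where "z = (\<chi> i. h (axis i 1))"
    have hz: "h n = qpair z n" for n unfolding z_def by (rule additive_qpair[OF hadd])
    have fz0: "f 0 = 0" using fadd z2 by (metis add.right_neutral add_cancel_right_right)
    have "qpair z n = 0" if n: "n \<in> N1" for n
    proof -
      have "P2 n = 0" by (rule uniq) (use z2 n in auto)
      then show ?thesis using hz[of n] fz0 unfolding h_def by simp
    qed
    then have zL: "z \<in> Lsp (Wt B)" using vanish_Lsp unfolding N1_def by blast
    have "coneI {u \<in> Wt B. qof u \<in> Lsp (Wt B)} \<subseteq> coneI P"
    proof (rule coneI_mono, rule subsetI)
      fix u assume u: "u \<in> {u \<in> Wt B. qof u \<in> Lsp (Wt B)}"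
      have "\<forall>n\<in>N1. pair u n = 0"
        using u Lsp_vanish[of "qof u" "Wt B"] unfolding N1_def by (auto simp: qpair_qof)
      then show "u \<in> P" using u resChar_zero_iff unfolding P_def by blast
    qed
    then have zP: "z \<in> coneI P" using Lsp_sub[OF zL] by blast
    have "f = res N2 z"
    proof
      fix n show "f n = res N2 z n"
      proof (cases "n \<in> N2")
        case True
        have "P2 n = n" by (rule uniq) (use True Kern_zero in \<open>auto simp: N1_def\<close>)
        then show ?thesis using True hz[of n] unfolding res_def h_def by simp
      next
        case False then show ?thesis using f0 unfolding res_def by simp
      qed
    qed
    then show "f \<in> res N2 ` coneI P" using zP by blast
  qed
  then show ?thesis unfolding hyperbolic_def wc2[OF g] P_def N1_def .
qed

lemma lastE:
  assumes g: "M_grading emb B" and spl: "lattice_splitting N1 N2"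
  shows "Bres B N1 (\<lambda>_. 0) \<inter> Bres B N2 (\<lambda>_. 0) = B 0"
proof (intro equalityI subsetI)
  fix x assume "x \<in> B 0"
  moreover have "resChar N' 0 = (\<lambda>_. 0)" for N' :: "(int^'b) set" by (auto simp: resChar_def)
  ultimately show "x \<in> Bres B N1 (\<lambda>_. 0) \<inter> Bres B N2 (\<lambda>_. 0)"
    using B_sub_Bres[of B 0 N1] B_sub_Bres[of B 0 N2] by auto
next
  fix x assume x: "x \<in> Bres B N1 (\<lambda>_. 0) \<inter> Bres B N2 (\<lambda>_. 0)"
  obtain F where F: "finite {u. F u \<noteq> 0}" "\<forall>u. F u \<in> B u" "x = (\<Sum>u\<in>{u. F u \<noteq> 0}. F u)"
      "\<forall>u. F u \<noteq> 0 \<longrightarrow> resChar N1 u = (\<lambda>_. 0) \<and> resChar N2 u = (\<lambda>_. 0)"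
    using Bres_rep[OF g IntD1[OF x] IntD2[OF x]] by (elim exE conjE) (rule that)
  have dec: "\<And>y. \<exists>a\<in>N1. \<exists>b\<in>N2. y = a + b" using spl unfolding lattice_splitting_def by blast
  have supp: "{u. F u \<noteq> 0} \<subseteq> {0}"
  proof
    fix u assume "u \<in> {u. F u \<noteq> 0}"
    then have r: "\<forall>n\<in>N1. pair u n = 0" "\<forall>n\<in>N2. pair u n = 0" using F(4) resChar_zero_iff by blast+
    obtain a b where "a \<in> N1" "b \<in> N2" "u = a + b" using dec by blast
    then have "pair u u = 0" using r by (metis add.right_neutral pair_add_right)
    then show "u \<in> {0}" using pair_self0 by blast
  qed
  show "x \<in> B 0"
  proof (cases "F 0 = 0")
    case True
    then have "{u. F u \<noteq> 0} = {}" using supp by blast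
    then show ?thesis using F(3) grading_zero[OF g] by simp
  next
    case False
    then have "{u. F u \<noteq> 0} = {0}" using supp by blast
    then show ?thesis using F(3) F(2) by simp
  qed
qed

theorem mainTheorem2:
  fixes emb :: "complex \<Rightarrow> 'a::idom" and B :: "int^'k \<Rightarrow> 'a set"
  assumes "affine_T_variety emb B"
  shows "\<exists>N1. (\<exists>N2. lattice_splitting N1 N2
            \<and> fix_pointed (Bres B N1)
            \<and> hyperbolic N2 (\<lambda>chi. Bres B N1 (\<lambda>_. 0) \<inter> Bres B N2 chi)
            \<and> Bres B N1 (\<lambda>_. 0) \<inter> Bres B N2 (\<lambda>_. 0) = B 0)
          \<and> (\<forall>N1' N2'. lattice_splitting N1' N2'
              \<and> fix_pointed (Bres B N1')
              \<and> hyperbolic N2' (\<lambda>chi. Bres B N1' (\<lambda>_. 0) \<inter> Bres B N2' chi)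
              \<and> Bres B N1' (\<lambda>_. 0) \<inter> Bres B N2' (\<lambda>_. 0) = B 0
              \<longrightarrow> N1' = N1)"
proof -
  have g: "M_grading emb B" using assms unfolding affine_T_variety_def by blast
  define N1 where "N1 = Kern (Lint (Wt B))"
  obtain N2 where spl: "lattice_splitting N1 N2" using complement_N1 unfolding N1_def by blast
  have E: "lattice_splitting N1 N2
            \<and> fix_pointed (Bres B N1)
            \<and> hyperbolic N2 (\<lambda>chi. Bres B N1 (\<lambda>_. 0) \<inter> Bres B N2 chi)
            \<and> Bres B N1 (\<lambda>_. 0) \<inter> Bres B N2 (\<lambda>_. 0) = B 0"
    using spl fixE[OF g] hypE[OF g] lastE[OF g spl] unfolding N1_def by blast
  have U: "N1' = N1" if A: "lattice_splitting N1' N2'" "fix_pointed (Bres B N1')"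
    "hyperbolic N2' (\<lambda>chi. Bres B N1' (\<lambda>_. 0) \<inter> Bres B N2' chi)" for N1' N2'
  proof
    show "N1' \<subseteq> N1"
    proof
      fix n assume "n \<in> N1'"
      then show "n \<in> N1" unfolding N1_def Kern_def using fixA[OF g A(2)] by blast
    qed
    show "N1 \<subseteq> N1'"
    proof
      fix n assume "n \<in> N1"
      then show "n \<in> N1'" using hypB[OF g A(1) A(3)] unfolding N1_def by blast
    qed
  qed
  show ?thesis
    by (rule exI[of _ N1], rule conjI, rule exI[of _ N2], rule E) (use U in blast)
qed

end
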